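(* Let $\chi$ be a kernel as described in the context with $m_1(\chi,u)=0$ for all $u\in\mathbb{R}^+$. Let $f:\mathbb{R}^+\to\mathbb{R}$ be such that $\theta f$ and $\theta^2 f$ exist and are continuous on $\mathbb{R}^+$, and suppose there are constants $\alpha,\beta>0$ with $|f(x)|\le\alpha+\beta|\log x|$ for all $x\in\mathbb{R}^+$ (f need not be bounded). Then for every $w>0$ and $x\in\mathbb{R}^+$ the series defining $(I_w^{\chi}f)(x)$ converges absolutely, and for every $x\in\mathbb{R}^+$, $$\lim_{w\to+\infty} w\big[(I_w^{\chi}f)(x)-f(x)\big]=\frac{(\theta f)(x)}{2}.$$
   Context: A kernel is a continuous function $\chi:\mathbb{R}^+\to\mathbb{R}$ satisfying: (i) $\sum_{k=-\infty}^{+\infty}\chi(e^{-k}u)=1$ for every $u\in\mathbb{R}^+$; (ii) $M_2(\chi)<+\infty$ and $\lim_{\gamma\to+\infty}\sum_{|k-\log u|>\gamma}|\chi(e^{-k}u)|\,|k-\log u|^2=0$ uniformly with respect to $u\in\mathbb{R}^+$. Algebraic moments: $m_\nu(\chi,u)=\sum_{k\in\mathbb{Z}}\chi(e^{-k}u)(k-\log u)^\nu$; absolute moments: $M_\nu(\chi,u)=\sum_{k\in\mathbb{Z}}|\chi(e^{-k}u)|\,|k-\log u|^\nu$, $M_\nu(\chi)=\sup_{u>0}M_\nu(\chi,u)$. For $w>0$, $x\in\mathbb{R}^+$: $(I_w^{\chi}f)(x)=\sum_{k\in\mathbb{Z}}\chi(e^{-k}x^w)\,w\int_{k/w}^{(k+1)/w}f(e^u)\,du$.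 Mellin differential operator: $(\theta f)(x)=xf'(x)$, $\theta^2=\theta(\theta)$. *)

theory Defs
  imports "HOL-Analysis.Analysis"
begin

definition alg_moment :: "nat \<Rightarrow> (real \<Rightarrow> real) \<Rightarrow> real \<Rightarrow> real" where
  "alg_moment \<nu> chi u = (\<Sum>\<^sub>\<infinity>k::int. chi (exp (- real_of_int k) * u) * (real_of_int k - ln u) ^ \<nu>)"

definition abs_moment :: "nat \<Rightarrow> (real \<Rightarrow> real) \<Rightarrow> real \<Rightarrow> real" where
  "abs_moment \<nu> chi u = (\<Sum>\<^sub>\<infinity>k::int. \<bar>chi (exp (- real_of_int k) * u)\<bar> * \<bar>real_of_int k - ln u\<bar> ^ \<nu>)"

definition kernel :: "(real \<Rightarrow> real) \<Rightarrow> bool" where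
  "kernel chi \<longleftrightarrow>
     continuous_on {0<..} chi \<and>
     (\<forall>u>0. ((\<lambda>k::int. chi (exp (- real_of_int k) * u)) has_sum 1) UNIV) \<and>
     (\<forall>u>0. (\<lambda>k::int. \<bar>chi (exp (- real_of_int k) * u)\<bar> * \<bar>real_of_int k - ln u\<bar> ^ 2) summable_on UNIV) \<and>
     bdd_above {abs_moment 2 chi u | u. u > 0} \<and>
     (\<forall>\<epsilon>>0. \<exists>\<gamma>0. \<forall>\<gamma>>\<gamma>0. \<forall>u>0.
        (\<Sum>\<^sub>\<infinity>k\<in>{k::int. \<bar>real_of_int k - ln u\<bar> > \<gamma>}.
            \<bar>chi (exp (- real_of_int k) * u)\<bar> * \<bar>real_of_int k - ln u\<bar> ^ 2) < \<epsilon>)"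

definition kantorovich_term :: "(real \<Rightarrow> real) \<Rightarrow> real \<Rightarrow> (real \<Rightarrow> real) \<Rightarrow> real \<Rightarrow> int \<Rightarrow> real" where
  "kantorovich_term chi w f x k =
     chi (exp (- real_of_int k) * x powr w) * (w * integral {real_of_int k / w .. (real_of_int k + 1) / w} (\<lambda>u. f (exp u)))"

definition kantorovich_op :: "(real \<Rightarrow> real) \<Rightarrow> real \<Rightarrow> (real \<Rightarrow> real) \<Rightarrow> real \<Rightarrow> real" where
  "kantorovich_op chi w f x = (\<Sum>\<^sub>\<infinity>k::int. kantorovich_term chi w f x k)"

definition theta :: "(real \<Rightarrow> real) \<Rightarrow> real \<Rightarrow> real" where
  "theta f x = x * deriv f x"

end

theory Submission
  imports Defs
begin


lemma cmp_summ:
  fixes f g :: "int \<Rightarrow> real"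
  assumes g: "g summable_on UNIV" and le: "\<And>k. \<bar>f k\<bar> \<le> g k"
  shows "f summable_on UNIV" "\<bar>infsum f UNIV\<bar> \<le> infsum g UNIV"
proof -
  have n: "(\<lambda>k. norm (f k)) summable_on UNIV"
    by (rule summable_on_comparison_test[OF g]) (use le in auto)
  then show fs: "f summable_on UNIV"
    using summable_on_iff_abs_summable_on_real by blast
  have "\<bar>infsum f UNIV\<bar> \<le> infsum (\<lambda>k. norm (f k)) UNIV"
    using norm_infsum_bound[OF n] by simp
  also have "\<dots> \<le> infsum g UNIV"
    by (rule infsum_mono[OF n g]) (use le in auto)
  finally show "\<bar>infsum f UNIV\<bar> \<le> infsum g UNIV" .
qed

lemma kernel_D_bound:
  assumes "kernel chi"
  shows "\<exists>K. \<forall>u>0. (\<lambda>k::int. \<bar>chi (exp (- real_of_int k) * u)\<bar> * (1 + (real_of_int k - ln u)^2)) summable_on UNIV \<and>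
     (\<Sum>\<^sub>\<infinity>k::int. \<bar>chi (exp (- real_of_int k) * u)\<bar> * (1 + (real_of_int k - ln u)^2)) \<le> K"
proof -
  from assms have cont: "continuous_on {0<..} chi"
    and summ: "\<forall>u>0. (\<lambda>k::int. \<bar>chi (exp (- real_of_int k) * u)\<bar> * \<bar>real_of_int k - ln u\<bar> ^ 2) summable_on UNIV"
    and bdd: "bdd_above {abs_moment 2 chi u | u. u > 0}"
    unfolding kernel_def by auto
  obtain M where M: "\<And>u. u > 0 \<Longrightarrow> abs_moment 2 chi u \<le> M"
    using bdd unfolding bdd_above_def by blast
  have "compact (chi ` {exp (-1)..exp 1})"
    by (rule compact_continuous_image, rule continuous_on_subset[OF cont])
       (auto intro: less_le_trans[OF exp_gt_zero])
  then have "bounded (chi ` {exp (-1)..exp 1})" by (rule compact_imp_bounded)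
  then obtain B where B0': "\<forall>v\<in>chi ` {exp (-1)..exp 1}. \<bar>v\<bar> \<le> B"
    unfolding bounded_real by (elim exE)
  have B: "\<bar>chi v\<bar> \<le> B" if "v \<in> {exp (-1)..exp 1}" for v
    using B0' that by blast
  have B0: "0 \<le> B" using B[of 1] by auto
  show ?thesis
  proof (intro exI allI impI conjI)
    fix u :: real assume u: "u > 0"
    define s where "s = ln u"
    define S where "S = {\<lfloor>s\<rfloor>, \<lfloor>s\<rfloor>+1}"
    define h1 where "h1 = (\<lambda>k::int. \<bar>chi (exp (- real_of_int k) * u)\<bar> * \<bar>real_of_int k - ln u\<bar> ^ 2)"
    define h2 where "h2 = (\<lambda>k::int. if k \<in> S then B else 0)"
    define D where "D = (\<lambda>k::int. \<bar>chi (exp (- real_of_int k) * u)\<bar> * (1 + (real_of_int k - ln u)^2))"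
    have h1s: "h1 summable_on UNIV" using summ u unfolding h1_def by auto
    have h2s: "(h2 has_sum (2*B)) UNIV"
      by (rule has_sum_finite_neutralI[of S]) (auto simp: S_def h2_def)
    have h2sum: "h2 summable_on UNIV" using h2s by (auto simp: summable_on_def)
    have gs: "(\<lambda>k. 2 * h1 k + 2 * h2 k) summable_on UNIV"
      using h1s h2sum by (intro summable_on_add summable_on_cmult_right)
    have "infsum (\<lambda>k. 2 * h1 k + 2 * h2 k) UNIV = infsum (\<lambda>k. 2 * h1 k) UNIV + infsum (\<lambda>k. 2 * h2 k) UNIV"
      by (rule infsum_add; intro summable_on_cmult_right h1s h2sum)
    also have "\<dots> = 2 * infsum h1 UNIV + 2 * infsum h2 UNIV"
      by (simp add: infsum_cmult_right h1s h2sum)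
    also have "infsum h2 UNIV = 2 * B" using h2s by (rule infsumI)
    also have "infsum h1 UNIV = abs_moment 2 chi u" by (simp add: abs_moment_def h1_def)
    finally have ginf: "infsum (\<lambda>k. 2 * h1 k + 2 * h2 k) UNIV = 2 * abs_moment 2 chi u + 4 * B" by simp
    have pt: "\<bar>D k\<bar> \<le> 2 * h1 k + 2 * h2 k" for k
    proof (cases "\<bar>real_of_int k - s\<bar> \<ge> 1")
      case True
      then have "1 \<le> \<bar>real_of_int k - s\<bar>^2"
        using one_le_power by blast
      then have "1 \<le> (real_of_int k - s)^2" by simp
      then have "D k \<le> 2 * h1 k"
        unfolding D_def h1_def s_def
        using mult_left_mono[of "1 + (real_of_int k - ln u)^2" "2 * (real_of_int k - ln u)^2" "\<bar>chi (exp (- real_of_int k) * u)\<bar>"]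
        by (simp add: algebra_simps)
      moreover have "0 \<le> h2 k" "0 \<le> D k" using B0 by (auto simp: h2_def D_def)
      ultimately show ?thesis by simp
    next
      case False
      then have "real_of_int k < s + 1" "s - 1 < real_of_int k" by linarith+
      then have "k \<le> \<lfloor>s\<rfloor> + 1" "\<lfloor>s\<rfloor> \<le> k"
      proof -
        have "k - 1 \<le> \<lfloor>s\<rfloor>" unfolding le_floor_iff using \<open>real_of_int k < s + 1\<close> by simp
        moreover have "\<lfloor>s\<rfloor> < k + 1" unfolding floor_less_iff using \<open>s - 1 < real_of_int k\<close> by simp
        ultimately show "k \<le> \<lfloor>s\<rfloor> + 1" "\<lfloor>s\<rfloor> \<le> k" by linarith+
      qed
      then have k: "k \<in> S" unfolding S_def by auto
      have "exp (- real_of_int k) * u = exp (s - k)" using u by (simp add: s_def exp_diff exp_minus field_simps)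
      moreover have "exp (s - k) \<in> {exp (-1)..exp 1}" using False by auto
      ultimately have "\<bar>chi (exp (- real_of_int k) * u)\<bar> \<le> B" using B by auto
      moreover have "(real_of_int k - ln u)^2 \<le> 1" using False
        unfolding abs_square_le_1 s_def by simp
      ultimately have "\<bar>chi (exp (- real_of_int k) * u)\<bar> * (1 + (real_of_int k - ln u)^2) \<le> B * 2"
        by (intro mult_mono) auto
      then have "D k \<le> 2 * B" unfolding D_def by simp
      moreover have "0 \<le> h1 k" "0 \<le> D k" using B0 by (auto simp: h1_def D_def)
      ultimately show ?thesis using k by (simp add: h2_def)
    qed
    show "D summable_on UNIV" using cmp_summ(1)[OF gs pt] .
    have "D summable_on UNIV" using cmp_summ(1)[OF gs pt] .
    have "infsum D UNIV \<le> 2 * M + 4 * B"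
      using cmp_summ(2)[OF gs pt] ginf M[OF u] by linarith
    then show "infsum D UNIV \<le> 2 * M + 4 * B" .
  qed
qed


lemma taylor_bound:
  fixes g g' g'' :: "real \<Rightarrow> real" and a b L :: real
  assumes dg: "\<And>y. (g has_real_derivative g' y) (at y)"
    and dg': "\<And>y. (g' has_real_derivative g'' y) (at y)"
    and cg'': "continuous_on UNIV g''"
    and a: "a \<ge> 0" and b: "b \<ge> 0"
    and gb: "\<And>y. \<bar>g y\<bar> \<le> a + b * \<bar>y\<bar>"
  shows "\<exists>C. \<forall>y. \<bar>g y - g L - g' L * (y - L)\<bar> \<le> C * (y - L)^2"
proof -
  define I where "I = {L - 1 .. L + 1}"
  have "compact (g'' ` I)" unfolding I_def
    by (rule compact_continuous_image, rule continuous_on_subset[OF cg'']) auto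
  then obtain B2 where B2: "\<And>z. z \<in> I \<Longrightarrow> \<bar>g'' z\<bar> \<le> B2"
    using compact_imp_bounded bounded_real by (metis image_eqI)
  have A: "\<bar>g' z - g' L\<bar> \<le> B2 * \<bar>z - L\<bar>" if "z \<in> I" for z
    using field_differentiable_bound[of I g' g'' B2 z L] that B2 dg'
    by (auto simp: I_def has_field_derivative_at_within)
  define C where "C = max B2 (a + b * \<bar>L\<bar> + \<bar>g L\<bar> + b + \<bar>g' L\<bar>)"
  show ?thesis
  proof (intro exI allI)
    fix y
    show "\<bar>g y - g L - g' L * (y - L)\<bar> \<le> C * (y - L)^2"
    proof (cases "\<bar>y - L\<bar> \<le> 1")
      case True
      define S where "S = {min L y .. max L y}"
      define r where "r = (\<lambda>z. g z - g L - g' L * (z - L))"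
      have SI: "S \<subseteq> I" using True by (auto simp: S_def I_def)
      have dr: "(r has_field_derivative (g' z - g' L)) (at z within S)" for z
        unfolding r_def
        by (rule has_field_derivative_at_within)
           (auto intro!: derivative_eq_intros dg)
      have bnd: "norm (g' z - g' L) \<le> B2 * \<bar>y - L\<bar>" if "z \<in> S" for z
      proof -
        have "\<bar>z - L\<bar> \<le> \<bar>y - L\<bar>" using that by (auto simp: S_def)
        moreover have "0 \<le> B2" using B2[of L] by (auto simp: I_def)
        ultimately show ?thesis using A[of z] SI that
          by (smt (verit) mult_left_mono real_norm_def subsetD)
      qed
      have "norm (r y - r L) \<le> B2 * \<bar>y - L\<bar> * norm (y - L)"
        by (rule field_differentiable_bound[of S r "\<lambda>z. g' z - g' L"]) (use dr bnd in \<open>auto simp: S_def\<close>)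
      then have "\<bar>g y - g L - g' L * (y - L)\<bar> \<le> B2 * (y - L)^2"
        by (simp add: r_def power2_eq_square)
      also have "\<dots> \<le> C * (y - L)^2" by (intro mult_right_mono) (auto simp: C_def)
      finally show ?thesis .
    next
      case False
      then have y1: "\<bar>y - L\<bar> \<le> (y - L)^2"
        using mult_left_mono[of 1 "\<bar>y - L\<bar>" "\<bar>y - L\<bar>"] by (simp add: power2_eq_square abs_mult_self_eq)
      have "\<bar>g y - g L - g' L * (y - L)\<bar> \<le> \<bar>g y\<bar> + \<bar>g L\<bar> + \<bar>g' L\<bar> * \<bar>y - L\<bar>"
        unfolding abs_mult[symmetric] by linarith
      also have "\<dots> \<le> a + b * \<bar>L\<bar> + b * \<bar>y - L\<bar> + \<bar>g L\<bar> + \<bar>g' L\<bar> * \<bar>y - L\<bar>"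
      proof -
        have "\<bar>y\<bar> \<le> \<bar>L\<bar> + \<bar>y - L\<bar>" by linarith
        then have "b * \<bar>y\<bar> \<le> b * \<bar>L\<bar> + b * \<bar>y - L\<bar>" using b
          by (metis distrib_left mult_left_mono)
        then show ?thesis using gb[of y] by linarith
      qed
      also have "\<dots> \<le> (a + b * \<bar>L\<bar> + \<bar>g L\<bar> + b + \<bar>g' L\<bar>) * (y - L)^2"
      proof -
        have one: "1 \<le> (y - L)^2" using False y1 by linarith
        have "a + b * \<bar>L\<bar> + \<bar>g L\<bar> \<le> (a + b * \<bar>L\<bar> + \<bar>g L\<bar>) * (y - L)^2"
          using one a b mult_left_mono[of 1 "(y - L)^2" "a + b * \<bar>L\<bar> + \<bar>g L\<bar>"] by simp
        moreover have "(b + \<bar>g' L\<bar>) * \<bar>y - L\<bar> \<le> (b + \<bar>g' L\<bar>) * (y - L)^2"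
          using y1 b by (simp add: mult_left_mono)
        ultimately show ?thesis by (simp add: algebra_simps)
      qed
      also have "\<dots> \<le> C * (y - L)^2" by (intro mult_right_mono) (auto simp: C_def)
      finally show ?thesis .
    qed
  qed
qed

lemma alg4: fixes c A B q E w :: real assumes "w \<noteq> 0"
  shows "c * (A + B * ((q + 1/2)/w) + E) = A*c + (B/w)*(c*q) + (B/(2*w))*c + c*E"
  using assms by (simp add: field_simps)

theorem mainTheorem3:
  fixes chi f :: "real \<Rightarrow> real" and \<alpha> \<beta> :: real
  assumes "kernel chi"
    and "\<forall>u>0. alg_moment 1 chi u = 0"
    and "\<forall>x>0. f differentiable (at x)"
    and "\<forall>x>0. theta f differentiable (at x)"
    and "continuous_on {0<..} (theta f)"
    and "continuous_on {0<..} (theta (theta f))"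
    and "\<alpha> > 0" and "\<beta> > 0"
    and "\<forall>x>0. \<bar>f x\<bar> \<le> \<alpha> + \<beta> * \<bar>ln x\<bar>"
  shows "(\<forall>w>0. \<forall>x>0. (\<lambda>k::int. \<bar>kantorovich_term chi w f x k\<bar>) summable_on UNIV) \<and>
         (\<forall>x>0. ((\<lambda>w. w * (kantorovich_op chi w f x - f x)) \<longlongrightarrow> theta f x / 2) at_top)"
proof -
  obtain K where K0: "\<forall>u>0. (\<lambda>k::int. \<bar>chi (exp (- real_of_int k) * u)\<bar> * (1 + (real_of_int k - ln u)^2)) summable_on UNIV \<and>
     (\<Sum>\<^sub>\<infinity>k::int. \<bar>chi (exp (- real_of_int k) * u)\<bar> * (1 + (real_of_int k - ln u)^2)) \<le> K"
    using kernel_D_bound[OF assms(1)] by (elim exE)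
  note K = K0[rule_format]
  have hs10: "\<forall>u>0. ((\<lambda>k::int. chi (exp (- real_of_int k) * u)) has_sum 1) UNIV"
    using assms(1) unfolding kernel_def by (elim conjE)
  note hs1 = hs10[rule_format]
  have key: "\<exists>C. \<forall>w>0. \<exists>SE. ((\<lambda>k. kantorovich_term chi w f x k) has_sum (f x + theta f x / (2*w) + SE)) UNIV
                \<and> \<bar>SE\<bar> \<le> C / w^2" if x: "x > 0" for x
  proof -
    define L where "L = ln x"
    define g where "g = (\<lambda>y. f (exp y))"
    define g' where "g' = (\<lambda>y. theta f (exp y))"
    define g'' where "g'' = (\<lambda>y. theta (theta f) (exp y))"
    have dg: "(g has_real_derivative g' y) (at y)" for y
    proof -
      have "(f has_real_derivative deriv f (exp y)) (at (exp y))"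
        using assms(3) by (simp add: DERIV_deriv_iff_real_differentiable)
      from DERIV_chain2[OF this DERIV_exp] show ?thesis
        by (simp add: g_def g'_def theta_def mult.commute)
    qed
    have dg': "(g' has_real_derivative g'' y) (at y)" for y
    proof -
      have "(theta f has_real_derivative deriv (theta f) (exp y)) (at (exp y))"
        using assms(4) by (simp add: DERIV_deriv_iff_real_differentiable)
      from DERIV_chain2[OF this DERIV_exp] show ?thesis
        by (simp add: g''_def g'_def theta_def[of "theta f"] mult.commute)
    qed
    have cg'': "continuous_on UNIV g''" unfolding g''_def
      by (rule continuous_on_compose2[OF assms(6) continuous_on_exp]) auto
    have gb: "\<bar>g y\<bar> \<le> \<alpha> + \<beta> * \<bar>y\<bar>" for y
      using assms(9)[rule_format, OF exp_gt_zero[of y]] by (simp add: g_def)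
    obtain C where C00: "\<forall>y. \<bar>g y - g L - g' L * (y - L)\<bar> \<le> C * (y - L)^2"
      using taylor_bound[OF dg dg' cg'' less_imp_le[OF assms(7)] less_imp_le[OF assms(8)] gb, of L] by (elim exE)
    note C = C00[rule_format]
    have C0: "0 \<le> C" using C[of "L+1"] by simp
    have gcont: "continuous_on UNIV g"
      by (intro continuous_at_imp_continuous_on ballI DERIV_isCont[OF dg])
    have fx: "f x = g L" and thx: "theta f x = g' L" using x by (simp_all add: g_def g'_def L_def)
    show ?thesis
    proof (rule exI[of _ "2 * C * K"], intro allI impI)
      fix w :: real assume w: "w > 0"
      define u where "u = x powr w"
      have u: "u > 0" using x by (simp add: u_def)
      define t where "t = ln u"
      have t: "t = w * L" using x by (simp add: t_def u_def L_def ln_powr)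
      define c where "c = (\<lambda>k::int. chi (exp (- real_of_int k) * u))"
      define r where "r = (\<lambda>y. g y - g L - g' L * (y - L))"
      have rcont: "continuous_on UNIV r" unfolding r_def
        by (intro continuous_intros gcont)
      define E where "E = (\<lambda>k::int. w * integral {real_of_int k / w .. (real_of_int k + 1) / w} r)"
      have Aeq: "w * integral {real_of_int k / w .. (real_of_int k + 1) / w} (\<lambda>u. f (exp u))
                   = g L + g' L * ((real_of_int k - t + 1/2) / w) + E k" for k :: int
      proof -
        define a where "a = real_of_int k / w"
        define b where "b = (real_of_int k + 1) / w"
        have ab: "a \<le> b" using w by (simp add: a_def b_def divide_right_mono)
        have lin: "((\<lambda>y. g L + g' L * (y - L)) has_integral
                 ((g L * b + g' L * (b - L)^2/2) - (g L * a + g' L * (a - L)^2/2))) {a..b}"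
          by (rule fundamental_theorem_of_calculus[OF ab])
             (auto intro!: derivative_eq_intros simp: has_real_derivative_iff_has_vector_derivative[symmetric])
        have ig: "g integrable_on {a..b}"
          by (rule integrable_continuous_interval, rule continuous_on_subset[OF gcont]) auto
        have req: "r = (\<lambda>y. g y - (g L + g' L * (y - L)))" by (auto simp: r_def fun_eq_iff)
        have "integral {a..b} r = integral {a..b} g - ((g L * b + g' L * (b - L)^2/2) - (g L * a + g' L * (a - L)^2/2))"
          unfolding req using ig lin by (simp add: integral_diff has_integral_integrable integral_unique)
        then have "integral {a..b} g = ((g L * b + g' L * (b - L)^2/2) - (g L * a + g' L * (a - L)^2/2)) + integral {a..b} r"
          by linarith
        moreover have "E k = w * integral {a..b} r" by (simp add: E_def a_def b_def)
        ultimately have "w * integral {a..b} g = w * ((g L * b + g' L * (b - L)^2/2) - (g L * a + g' L * (a - L)^2/2)) + E k"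
          by (simp add: distrib_left)
        also have "w * ((g L * b + g' L * (b - L)^2/2) - (g L * a + g' L * (a - L)^2/2))
             = g L + g' L * ((real_of_int k - t + 1/2) / w)"
          using w by (simp add: a_def b_def t field_simps power2_eq_square)
        finally show ?thesis by (simp add: a_def b_def g_def)
      qed
      have Eb: "\<bar>E k\<bar> \<le> (2 * C / w^2) * (1 + (real_of_int k - t)^2)" for k :: int
      proof -
        define a where "a = real_of_int k / w"
        define b where "b = (real_of_int k + 1) / w"
        have ab: "a \<le> b" using w by (simp add: a_def b_def divide_right_mono)
        have pt: "norm (r y) \<le> C * ((\<bar>real_of_int k - t\<bar> + 1) / w)^2" if y: "y \<in> {a..b}" for y
        proof -
          have "real_of_int k \<le> w * y" "w * y \<le> real_of_int k + 1"
            using y w by (auto simp: a_def b_def field_simps)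
          then have "\<bar>w * y - t\<bar> \<le> \<bar>real_of_int k - t\<bar> + 1" by linarith
          moreover have "w * y - t = w * (y - L)" by (simp add: t algebra_simps)
          ultimately have "w * \<bar>y - L\<bar> \<le> \<bar>real_of_int k - t\<bar> + 1" using w by (simp add: abs_mult)
          then have "\<bar>y - L\<bar> \<le> (\<bar>real_of_int k - t\<bar> + 1) / w" using w by (simp add: field_simps)
          then have "(y - L)^2 \<le> ((\<bar>real_of_int k - t\<bar> + 1) / w)^2"
            by (metis abs_ge_zero power2_abs power_mono)
          then have "C * (y - L)^2 \<le> C * ((\<bar>real_of_int k - t\<bar> + 1) / w)^2"
            using C0 by (rule mult_left_mono)
          then show ?thesis using C[of y] by (simp add: r_def)
        qed
        have "norm (integral {a..b} r) \<le> C * ((\<bar>real_of_int k - t\<bar> + 1) / w)^2 * (b - a)"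
          by (rule integral_bound[OF ab continuous_on_subset[OF rcont] pt]) auto
        also have "b - a = 1 / w" using w by (simp add: a_def b_def field_simps)
        finally have I: "\<bar>integral {a..b} r\<bar> \<le> C * ((\<bar>real_of_int k - t\<bar> + 1) / w)^2 * (1 / w)"
          by simp
        have "\<bar>E k\<bar> = w * \<bar>integral {a..b} r\<bar>" using w by (simp add: E_def a_def b_def abs_mult)
        also have "\<dots> \<le> w * (C * ((\<bar>real_of_int k - t\<bar> + 1) / w)^2 * (1 / w))"
          using I w by (intro mult_left_mono) auto
        also have "\<dots> = C * (\<bar>real_of_int k - t\<bar> + 1)^2 / w^2"
          using w by (simp add: field_simps power2_eq_square)
        also have "\<dots> \<le> C * (2 * (1 + (real_of_int k - t)^2)) / w^2"
        proof -
          have "(\<bar>real_of_int k - t\<bar> + 1)^2 \<le> 2 * (1 + (real_of_int k - t)^2)"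
          proof -
            define d where "d = real_of_int k - t"
            have e: "(\<bar>d\<bar> + 1)^2 = d^2 + 2 * \<bar>d\<bar> + 1" by (simp add: power2_sum)
            have f: "(\<bar>d\<bar> - 1)^2 = d^2 - 2 * \<bar>d\<bar> + 1" by (simp add: power2_diff)
            have "0 \<le> (\<bar>d\<bar> - 1)^2" by simp
            then show ?thesis using e f unfolding d_def[symmetric] by (smt (verit))
          qed
          then have "C * (\<bar>real_of_int k - t\<bar> + 1)^2 \<le> C * (2 * (1 + (real_of_int k - t)^2))"
            using C0 by (rule mult_left_mono)
          then show ?thesis by (rule divide_right_mono) simp
        qed
        finally show ?thesis by (simp add: field_simps)
      qed
      define D where "D = (\<lambda>k::int. \<bar>c k\<bar> * (1 + (real_of_int k - t)^2))"
      have Ds: "D summable_on UNIV" and DK: "infsum D UNIV \<le> K"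
        using K[OF u] by (simp_all add: D_def c_def t_def)
      have h1: "(c has_sum 1) UNIV" using hs1[OF u] by (simp add: c_def)
      have h2s: "(\<lambda>k. c k * (real_of_int k - t)) summable_on UNIV"
      proof (rule cmp_summ(1)[OF Ds])
        fix k :: int
        have "\<bar>real_of_int k - t\<bar> \<le> 1 + (real_of_int k - t)^2"
        proof -
          define d where "d = real_of_int k - t"
          have f: "(\<bar>d\<bar> - 1)^2 = d^2 - 2 * \<bar>d\<bar> + 1" by (simp add: power2_diff)
          have "0 \<le> (\<bar>d\<bar> - 1)^2" by simp
          then show ?thesis using f unfolding d_def[symmetric] by (smt (verit))
        qed
        then show "\<bar>c k * (real_of_int k - t)\<bar> \<le> D k"
          by (simp add: D_def abs_mult mult_left_mono)
      qed
      have "infsum (\<lambda>k. c k * (real_of_int k - t)) UNIV = alg_moment 1 chi u"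
        by (simp add: alg_moment_def c_def t_def)
      also have "\<dots> = 0" using assms(2) u by simp
      finally have m0: "infsum (\<lambda>k. c k * (real_of_int k - t)) UNIV = 0" .
      have h2: "((\<lambda>k. c k * (real_of_int k - t)) has_sum 0) UNIV"
        using has_sum_infsum[OF h2s] unfolding m0 .
      have D2s: "(\<lambda>k. (2 * C / w^2) * D k) summable_on UNIV" using Ds by (rule summable_on_cmult_right)
      have h3b: "\<bar>c k * E k\<bar> \<le> (2 * C / w^2) * D k" for k
      proof -
        have "\<bar>c k * E k\<bar> = \<bar>c k\<bar> * \<bar>E k\<bar>" by (simp add: abs_mult)
        also have "\<dots> \<le> \<bar>c k\<bar> * ((2 * C / w^2) * (1 + (real_of_int k - t)^2))"
          using Eb[of k] by (rule mult_left_mono) simp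
        also have "\<dots> = (2 * C / w^2) * D k" by (simp add: D_def)
        finally show ?thesis .
      qed
      have h3s: "(\<lambda>k. c k * E k) summable_on UNIV" by (rule cmp_summ(1)[OF D2s h3b])
      define SE where "SE = infsum (\<lambda>k. c k * E k) UNIV"
      have h3: "((\<lambda>k. c k * E k) has_sum SE) UNIV" using h3s by (simp add: SE_def)
      have "\<bar>SE\<bar> \<le> infsum (\<lambda>k. (2 * C / w^2) * D k) UNIV" unfolding SE_def by (rule cmp_summ(2)[OF D2s h3b])
      also have "\<dots> = (2 * C / w^2) * infsum D UNIV" by (rule infsum_cmult_right) (rule Ds)
      also have "\<dots> \<le> (2 * C / w^2) * K" using DK C0 by (intro mult_left_mono) auto
      finally have SEb: "\<bar>SE\<bar> \<le> (2 * C * K) / w^2" by simp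
      have sum4: "((\<lambda>k. g L * c k + (g' L / w) * (c k * (real_of_int k - t)) + (g' L / (2*w)) * c k + c k * E k)
               has_sum (g L * 1 + g' L / w * 0 + g' L / (2*w) * 1 + SE)) UNIV"
        by (intro has_sum_add has_sum_cmult_right h1 h2 h3)
      have "((\<lambda>k. kantorovich_term chi w f x k) has_sum (f x + theta f x / (2*w) + SE)) UNIV"
      proof -
        have "kantorovich_term chi w f x k = g L * c k + (g' L / w) * (c k * (real_of_int k - t)) + (g' L / (2*w)) * c k + c k * E k" for k
        proof -
          have ck: "chi (exp (- real_of_int k) * x powr w) = c k" by (simp add: c_def u_def)
          show ?thesis unfolding kantorovich_term_def Aeq ck by (rule alg4) (use w in simp)
        qed
        then have eqf: "(\<lambda>k. kantorovich_term chi w f x k) = (\<lambda>k. g L * c k + (g' L / w) * (c k * (real_of_int k - t)) + (g' L / (2*w)) * c k + c k * E k)"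
          by (rule ext)
        have valeq: "g L * 1 + g' L / w * 0 + g' L / (2*w) * 1 + SE = f x + theta f x / (2*w) + SE"
          by (simp add: fx thx)
        show ?thesis unfolding eqf using sum4 unfolding valeq .
      qed
      then show "\<exists>SE. ((\<lambda>k. kantorovich_term chi w f x k) has_sum (f x + theta f x / (2*w) + SE)) UNIV
                \<and> \<bar>SE\<bar> \<le> (2 * C * K) / w^2" using SEb by blast
    qed
  qed
  show ?thesis
  proof (intro conjI allI impI)
    fix w x :: real assume w: "w > 0" and x: "x > 0"
    obtain C where "\<forall>w>0. \<exists>SE. ((\<lambda>k. kantorovich_term chi w f x k) has_sum (f x + theta f x / (2*w) + SE)) UNIV
                \<and> \<bar>SE\<bar> \<le> C / w^2" using key[OF x] by blast
    then obtain SE where "((\<lambda>k. kantorovich_term chi w f x k) has_sum (f x + theta f x / (2*w) + SE)) UNIV"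
      using w by blast
    then have "(\<lambda>k. kantorovich_term chi w f x k) summable_on UNIV" by (auto simp: summable_on_def)
    then show "(\<lambda>k::int. \<bar>kantorovich_term chi w f x k\<bar>) summable_on UNIV"
      using summable_on_iff_abs_summable_on_real[THEN iffD1] by (simp add: real_norm_def)
  next
    fix x :: real assume x: "x > 0"
    obtain C where C: "\<forall>w>0. \<exists>SE. ((\<lambda>k. kantorovich_term chi w f x k) has_sum (f x + theta f x / (2*w) + SE)) UNIV
                \<and> \<bar>SE\<bar> \<le> C / w^2" using key[OF x] by blast
    have ev: "eventually (\<lambda>w. norm (w * (kantorovich_op chi w f x - f x) - theta f x / 2) \<le> \<bar>C\<bar> / w) at_top"
      using eventually_gt_at_top[of 0]
    proof eventually_elim
      case (elim w)
      then obtain SE where hs: "((\<lambda>k. kantorovich_term chi w f x k) has_sum (f x + theta f x / (2*w) + SE)) UNIV"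
        and SE: "\<bar>SE\<bar> \<le> C / w^2" using C by blast
      have "kantorovich_op chi w f x = f x + theta f x / (2*w) + SE"
        unfolding kantorovich_op_def using hs by (rule infsumI)
      then have "w * (kantorovich_op chi w f x - f x) - theta f x / 2 = w * SE"
        using elim by (simp add: field_simps)
      moreover have "\<bar>w * SE\<bar> \<le> \<bar>C\<bar> / w"
      proof -
        have "\<bar>w * SE\<bar> = w * \<bar>SE\<bar>" using elim by (simp add: abs_mult)
        also have "\<dots> \<le> w * (C / w^2)" using SE elim by (intro mult_left_mono) auto
        also have "\<dots> = C / w" using elim by (simp add: power2_eq_square field_simps)
        also have "\<dots> \<le> \<bar>C\<bar> / w" using elim by (simp add: divide_right_mono)
        finally show ?thesis .
      qed
      ultimately show ?case by simp
    qed
    have "((\<lambda>w. \<bar>C\<bar> / w) \<longlongrightarrow> 0) at_top"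
      by (rule tendsto_divide_0[OF tendsto_const filterlim_at_top_imp_at_infinity[OF filterlim_ident]])
    then have "((\<lambda>w. w * (kantorovich_op chi w f x - f x) - theta f x / 2) \<longlongrightarrow> 0) at_top"
      by (rule Lim_null_comparison[OF ev])
    then show "((\<lambda>w. w * (kantorovich_op chi w f x - f x)) \<longlongrightarrow> theta f x / 2) at_top"
      by (subst Lim_null) 
  qed
qed

end
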